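(* Let $n$ be any positive integer. There exists a 2-layer transformer, with a suitable position embedding, that performs function evaluation for domain $[n]$ in the "consecutive positions, permuted keys" presentation. That is, for every $f:[n]\to[n]$, every permutation $\pi$ of $[n]$ and every $i^*\in[n]$, on the input $\pi(0),f(\pi(0)),\pi(1),f(\pi(1)),\dots,\pi(n-1),f(\pi(n-1)),i^*$ of length $2n+1$, it outputs $f(i^* )$. The transformer uses leftmost hard attention, one head per attention layer, embedding dimension $7$, $O(\log n)$ bits of precision, a residual connection in the first attention layer, and no MLP layer.
   Context: Notation: $[n]=\{0,\dots,n-1\}$. Transformer model (encoder-only, no masking, no layer normalization). A transformer of embedding dimension $d$ consists of three parts. - An input embedding sends position $i$ with token $x_i$ to $\mathbf{w}(x_i)+\mathbf{p}(i)\in\mathbb{R}^d$. The token embedding $\mathbf{w}$ and the position embedding $\mathbf{p}$ may be chosen freely. - Length-preserving layers follow. - The output is the index in $[n]$ maximizing $\mathbf{U}\mathbf{Y}[L-1]$, where $\mathbf{U}\in\mathbb{R}^{n\times d}$ and $\mathbf{Y}[L-1]$ is the final layer's vector at the last position. A single-head attention layer has $\mathbf{W}^Q,\mathbf{W}^K\in\mathbb{R}^{d_{hid}\times d}$ and $\mathbf{W}^V\in\mathbb{R}^{d\times d}$. It computes the scores $s[i,j]=(\mathbf{W}^Q\mathbf{X}[i])\cdot(\mathbf{W}^K\mathbf{X}[j])/\sqrt{d_{hid}}$. - In leftmost hard attention, $\alpha[i,j]=1$ for the smallest $j$ maximizing $s[i,j]$, and $0$ otherwise. - The layer output is $\sum_j\alpha[i,j]\mathbf{W}^V\mathbf{X}[j]$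 without a residual, or $\mathbf{X}[i]+\sum_j\alpha[i,j]\mathbf{W}^V\mathbf{X}[j]$ with a residual. A $k$-layer transformer has $k$ attention layers and any number of position-wise ReLU MLP layers. *)

theory Defs
  imports Complex_Main
begin

text \<open>Vectors in R^d are functions nat => real of which only coordinates < d matter;
  matrices are functions nat => nat => real (row, column).\<close>

type_synonym vec = "nat \<Rightarrow> real"
type_synonym mat = "nat \<Rightarrow> nat \<Rightarrow> real"

definition mv :: "nat \<Rightarrow> mat \<Rightarrow> vec \<Rightarrow> vec" where
  "mv d M x = (\<lambda>r. \<Sum>c<d. M r c * x c)"

definition dotp :: "nat \<Rightarrow> vec \<Rightarrow> vec \<Rightarrow> real" where
  "dotp m x y = (\<Sum>r<m. x r * y r)"

text \<open>A single-head attention layer: hidden dimension d_hid, W^Q, W^K (d_hid x d), W^V (d x d).\<close>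
record attn =
  dh :: nat
  WQ :: mat
  WK :: mat
  WV :: mat

definition score :: "nat \<Rightarrow> attn \<Rightarrow> (nat \<Rightarrow> vec) \<Rightarrow> nat \<Rightarrow> nat \<Rightarrow> real" where
  "score d L X i j =
     dotp (dh L) (mv d (WQ L) (X i)) (mv d (WK L) (X j)) / sqrt (real (dh L))"

definition hard_alpha :: "nat \<Rightarrow> (nat \<Rightarrow> nat \<Rightarrow> real) \<Rightarrow> nat \<Rightarrow> nat \<Rightarrow> real" where
  "hard_alpha N s i j =
     (if j = (LEAST j'. j' < N \<and> (\<forall>j''<N. s i j'' \<le> s i j')) then 1 else 0)"

definition attn_layer :: "nat \<Rightarrow> attn \<Rightarrow> bool \<Rightarrow> nat \<Rightarrow> (nat \<Rightarrow> vec) \<Rightarrow> nat \<Rightarrow> vec" where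
  "attn_layer d L res N X i =
     (\<lambda>r. (if res then X i r else 0) +
          (\<Sum>j<N. hard_alpha N (score d L X) i j * mv d (WV L) (X j) r))"

definition embed :: "(nat \<Rightarrow> vec) \<Rightarrow> (nat \<Rightarrow> vec) \<Rightarrow> (nat \<Rightarrow> nat) \<Rightarrow> nat \<Rightarrow> vec" where
  "embed w pe xs k = (\<lambda>r. w (xs k) r + pe k r)"

definition fe_input :: "nat \<Rightarrow> (nat \<Rightarrow> nat) \<Rightarrow> (nat \<Rightarrow> nat) \<Rightarrow> nat \<Rightarrow> nat \<Rightarrow> nat" where
  "fe_input n f \<pi> istar k =
     (if k = 2 * n then istar
      else if even k then \<pi> (k div 2) else f (\<pi> (k div 2)))"

text \<open>Fixed-point number with p fractional bits and 2p bits in total (plus sign):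
  x = k / 2^p with |k| < 2^(2p).  "O(log n) bits" is rendered as p \<le> C log2(n+1).\<close>
definition fixp :: "nat \<Rightarrow> real \<Rightarrow> bool" where
  "fixp p x \<longleftrightarrow> (\<exists>k::int. x = real_of_int k / 2 ^ p \<and> \<bar>k\<bar> < 2 ^ (2 * p))"

definition attn_params_prec :: "nat \<Rightarrow> nat \<Rightarrow> attn \<Rightarrow> bool" where
  "attn_params_prec p d L \<longleftrightarrow>
     (\<forall>a<dh L. \<forall>c<d. fixp p (WQ L a c) \<and> fixp p (WK L a c)) \<and>
     (\<forall>a<d. \<forall>c<d. fixp p (WV L a c))"

definition attn_comp_prec :: "nat \<Rightarrow> nat \<Rightarrow> attn \<Rightarrow> bool \<Rightarrow> nat \<Rightarrow> (nat \<Rightarrow> vec) \<Rightarrow> bool" where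
  "attn_comp_prec p d L res N X \<longleftrightarrow>
     (\<forall>i<N. (\<forall>a<dh L. fixp p (mv d (WQ L) (X i) a) \<and> fixp p (mv d (WK L) (X i) a)) \<and>
            (\<forall>r<d. fixp p (mv d (WV L) (X i) r) \<and> fixp p (attn_layer d L res N X i r)) \<and>
            (\<forall>j<N. fixp p (score d L X i j)))"

end

theory Submission
  imports Defs
begin


lemma attn_simp:
  "attn_layer d L res N X i r = (if res then X i r else 0) +
     (let m = (LEAST j'. j' < N \<and> (\<forall>j''<N. score d L X i j'' \<le> score d L X i j'))
      in if m < N then mv d (WV L) (X m) r else 0)"
proof -
  have h: "\<And>m g. (\<Sum>j<N. (if j = m then 1 else 0) * g j) = (if m < N then g m else (0::real))"
  proof -
    fix m and g :: "nat \<Rightarrow> real"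
    have "(\<Sum>j<N. (if j = m then 1 else 0) * g j) = (\<Sum>j<N. if j = m then g j else 0)"
      by (rule sum.cong) auto
    then show "(\<Sum>j<N. (if j = m then 1 else 0) * g j) = (if m < N then g m else (0::real))" by simp
  qed
  show ?thesis unfolding attn_layer_def hard_alpha_def Let_def h by simp
qed

lemma least_unique:
  fixes s :: "nat \<Rightarrow> real"
  assumes "j0 < N" "\<forall>j<N. j \<noteq> j0 \<longrightarrow> s j < s j0"
  shows "(LEAST j'. j' < N \<and> (\<forall>j''<N. s j'' \<le> s j')) = j0"
proof (rule Least_equality)
  show "j0 < N \<and> (\<forall>j''<N. s j'' \<le> s j0)" using assms by (metis less_eq_real_def)
next
  fix y assume "y < N \<and> (\<forall>j''<N. s j'' \<le> s y)"
  then show "j0 \<le> y" using assms by (metis not_less order.refl)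
qed

definition q1 :: mat where "q1 a c = (if a = 0 \<and> (c = 0 \<or> c = 3) then 4 else if a = 1 \<and> c = 0 then -2 else 0)"
definition k1 :: mat where "k1 a c = (if a = 0 \<and> c = 3 then 1 else if a = 1 \<and> c = 4 then 1 else 0)"
definition v1 :: mat where "v1 a c = (if a = 5 \<and> c = 1 then 1 else 0)"
definition q2 :: mat where "q2 a c = (if a = 0 \<and> c = 1 then 4 else if (a = 1 \<or> a = 2) \<and> c = 0 then -2 else 0)"
definition k2 :: mat where "k2 a c = (if a = 0 \<and> c = 1 then 1 else if a = 1 \<and> c = 2 then 1 else if a = 2 \<and> c = 6 then 1 else 0)"
definition v2 :: mat where "v2 a c = (if a = 0 \<and> c = 5 then 1 else if a = 1 \<and> c = 0 then 1 else 0)"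
definition LA :: attn where "LA = \<lparr>dh = 4, WQ = q1, WK = k1, WV = v1\<rparr>"
definition LB :: attn where "LB = \<lparr>dh = 4, WQ = q2, WK = k2, WV = v2\<rparr>"
definition w0 :: "nat \<Rightarrow> vec" where "w0 x = (\<lambda>r. if r = 1 then real x else if r = 2 then real x ^ 2 else 0)"
definition pe0 :: "nat \<Rightarrow> nat \<Rightarrow> vec" where
  "pe0 n k = (\<lambda>r. if r = 0 then 1 else if r = 3 then real k else if r = 4 then real k ^ 2
      else if r = 6 then (if odd k \<or> k = 2 * n then 1 else 0) else 0)"
definition U0 :: mat where "U0 k r = (if r = 0 then 2 * real k else if r = 1 then - (real k ^ 2) else 0)"

lemma mv_q1: "mv 7 q1 v = (\<lambda>a. (if a = 0 then 4 * v 0 + 4 * v 3 else if a = 1 then -2 * v 0 else 0))"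
  by (rule ext, simp add: mv_def q1_def eval_nat_numeral)
lemma mv_k1: "mv 7 k1 v = (\<lambda>a. (if a = 0 then v 3 else if a = 1 then v 4 else 0))"
  by (rule ext, simp add: mv_def k1_def eval_nat_numeral)
lemma mv_v1: "mv 7 v1 v = (\<lambda>a. (if a = 5 then v 1 else 0))"
  by (rule ext, simp add: mv_def v1_def eval_nat_numeral)
lemma mv_q2: "mv 7 q2 v = (\<lambda>a. (if a = 0 then 4 * v 1 else if a = 1 \<or> a = 2 then -2 * v 0 else 0))"
  by (rule ext, simp add: mv_def q2_def eval_nat_numeral)
lemma mv_k2: "mv 7 k2 v = (\<lambda>a. (if a = 0 then v 1 else if a = 1 then v 2 else if a = 2 then v 6 else 0))"
  by (rule ext, simp add: mv_def k2_def eval_nat_numeral)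
lemma mv_v2: "mv 7 v2 v = (\<lambda>a. (if a = 0 then v 5 else if a = 1 then v 0 else 0))"
  by (rule ext, simp add: mv_def v2_def eval_nat_numeral)

lemma score_LA: "score 7 LA X i j = 2 * (X i 0 + X i 3) * X j 3 - X i 0 * X j 4"
  unfolding score_def LA_def by (simp add: mv_q1 mv_k1, simp add: dotp_def eval_nat_numeral algebra_simps)
lemma score_LB: "score 7 LB X i j = 2 * X i 1 * X j 1 - X i 0 * X j 2 - X i 0 * X j 6"
  unfolding score_def LB_def by (simp add: mv_q2 mv_k2, simp add: dotp_def eval_nat_numeral algebra_simps)

lemma logit_U0: "(\<Sum>r<7. U0 k r * Y r) = 2 * real k * Y 0 - real k ^ 2 * Y 1"
  by (simp add: U0_def eval_nat_numeral)

definition QQ :: "real \<Rightarrow> real \<Rightarrow> bool" where "QQ M x \<longleftrightarrow> x \<in> \<int> \<and> \<bar>x\<bar> \<le> M"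

lemma fixp_I:
  assumes "x \<in> \<int>" "\<bar>x\<bar> < 2 ^ p" shows "fixp p x"
proof -
  obtain m where m: "x = of_int m" using assms(1) Ints_cases by blast
  have "\<bar>real_of_int m\<bar> < 2 ^ p" using assms m by simp
  then have mb: "\<bar>m\<bar> < 2 ^ p" by (metis of_int_abs of_int_less_iff of_int_numeral of_int_power)
  have "\<bar>m * 2 ^ p\<bar> = \<bar>m\<bar> * 2 ^ p" by (simp add: abs_mult)
  also have "\<dots> < 2 ^ p * 2 ^ p" using mb by (intro mult_strict_right_mono) auto
  also have "\<dots> = 2 ^ (2 * p)" by (simp add: power_add[symmetric] mult_2)
  finally have "\<bar>m * 2 ^ p\<bar> < 2 ^ (2 * p)" .
  moreover have "x = real_of_int (m * 2 ^ p) / 2 ^ p" using m by simp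
  ultimately show ?thesis unfolding fixp_def by blast
qed

lemma QQ_mult: "QQ M a \<Longrightarrow> QQ M b \<Longrightarrow> a * b \<in> \<int> \<and> - (M^2) \<le> a * b \<and> a * b \<le> M^2"
proof -
  assume a: "QQ M a" and b: "QQ M b"
  have "\<bar>a * b\<bar> \<le> M * M" unfolding abs_mult
    using a b unfolding QQ_def by (intro mult_mono) auto
  then show ?thesis using a b unfolding QQ_def by (auto simp: power2_eq_square abs_le_iff)
qed

lemma QQ_D: "QQ M a \<Longrightarrow> a \<in> \<int> \<and> - M \<le> a \<and> a \<le> M"
  unfolding QQ_def by auto

lemma prec_LA:
  assumes XQ: "\<forall>i<N. \<forall>r. QQ M (X i r)" and YQ: "\<forall>i<N. \<forall>r. QQ M (attn_layer 7 LA True N X i r)"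
    and M1: "1 \<le> M" and P: "8 * M^2 < 2 ^ p"
  shows "attn_comp_prec p 7 LA True N X"
proof -
  have MM: "M \<le> M^2" using M1 by (simp add: power2_eq_square)
  have F: "fixp p x" if "x \<in> \<int>" "- (8 * M^2) \<le> x" "x \<le> 8 * M^2" for x
    using that P by (intro fixp_I) auto
  show ?thesis unfolding attn_comp_prec_def
  proof (intro allI impI conjI)
    fix i a assume i: "i < N" and a: "a < dh LA"
    have "QQ M (X i 0)" "QQ M (X i 3)" using XQ i by auto
    note h = QQ_D[OF this(1)] QQ_D[OF this(2)]
    show "fixp p (mv 7 (WQ LA) (X i) a)" using h MM
      by (auto simp: LA_def mv_q1 intro!: F)
    have "QQ M (X i 3)" "QQ M (X i 4)" using XQ i by auto
    note h = QQ_D[OF this(1)] QQ_D[OF this(2)]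
    show "fixp p (mv 7 (WK LA) (X i) a)" using h MM
      by (auto simp: LA_def mv_k1 intro!: F)
  next
    fix i and r :: nat assume i: "i < N" and r: "r < 7"
    have "QQ M (X i 1)" using XQ i by auto
    note h = QQ_D[OF this(1)]
    show "fixp p (mv 7 (WV LA) (X i) r)" using h MM
      by (auto simp: LA_def mv_v1 intro!: F)
    show "fixp p (attn_layer 7 LA True N X i r)" using QQ_D[of M "attn_layer 7 LA True N X i r"] YQ i MM
      by (auto intro!: F)
  next
    fix i j assume i: "i < N" and j: "j < N"
    have "QQ M (X i 0)" "QQ M (X i 3)" "QQ M (X j 3)" "QQ M (X j 4)" using XQ i j by auto
    note h = QQ_mult[OF this(1) this(3)] QQ_mult[OF this(2) this(3)] QQ_mult[OF this(1) this(4)]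
    have e: "score 7 LA X i j = 2 * (X i 0 * X j 3) + 2 * (X i 3 * X j 3) - X i 0 * X j 4"
      unfolding score_LA by (simp add: algebra_simps)
    show "fixp p (score 7 LA X i j)" unfolding e using h MM
      by (intro F) auto
  qed
qed

lemma prec_LB:
  assumes XQ: "\<forall>i<N. \<forall>r. QQ M (X i r)" and YQ: "\<forall>i<N. \<forall>r. QQ M (attn_layer 7 LB False N X i r)"
    and M1: "1 \<le> M" and P: "8 * M^2 < 2 ^ p"
  shows "attn_comp_prec p 7 LB False N X"
proof -
  have MM: "M \<le> M^2" using M1 by (simp add: power2_eq_square)
  have F: "fixp p x" if "x \<in> \<int>" "- (8 * M^2) \<le> x" "x \<le> 8 * M^2" for x
    using that P by (intro fixp_I) auto
  show ?thesis unfolding attn_comp_prec_def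
  proof (intro allI impI conjI)
    fix i a assume i: "i < N" and a: "a < dh LB"
    have "QQ M (X i 0)" "QQ M (X i 1)" using XQ i by auto
    note h = QQ_D[OF this(1)] QQ_D[OF this(2)]
    show "fixp p (mv 7 (WQ LB) (X i) a)" using h MM
      by (auto simp: LB_def mv_q2 intro!: F)
    have "QQ M (X i 1)" "QQ M (X i 2)" "QQ M (X i 6)" using XQ i by auto
    note h = QQ_D[OF this(1)] QQ_D[OF this(2)] QQ_D[OF this(3)]
    show "fixp p (mv 7 (WK LB) (X i) a)" using h MM
      by (auto simp: LB_def mv_k2 intro!: F)
  next
    fix i and r :: nat assume i: "i < N" and r: "r < 7"
    have "QQ M (X i 5)" "QQ M (X i 0)" using XQ i by auto
    note h = QQ_D[OF this(1)] QQ_D[OF this(2)]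
    show "fixp p (mv 7 (WV LB) (X i) r)" using h MM
      by (auto simp: LB_def mv_v2 intro!: F)
    show "fixp p (attn_layer 7 LB False N X i r)" using QQ_D[of M "attn_layer 7 LB False N X i r"] YQ i MM
      by (auto intro!: F)
  next
    fix i j assume i: "i < N" and j: "j < N"
    have "QQ M (X i 0)" "QQ M (X i 1)" "QQ M (X j 1)" "QQ M (X j 2)" "QQ M (X j 6)" using XQ i j by auto
    note h = QQ_mult[OF this(2) this(3)] QQ_mult[OF this(1) this(4)] QQ_mult[OF this(1) this(5)]
    have e: "score 7 LB X i j = 2 * (X i 1 * X j 1) - X i 0 * X j 2 - X i 0 * X j 6"
      unfolding score_LB by (simp add: algebra_simps)
    show "fixp p (score 7 LB X i j)" unfolding e using h MM
      by (intro F) auto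
  qed
qed


lemma main:
  fixes n istar p :: nat and f \<pi> :: "nat \<Rightarrow> nat"
  assumes n1: "n \<ge> 1" and fr: "\<forall>x<n. f x < n" and bij: "bij_betw \<pi> {..<n} {..<n}"
    and ist: "istar < n" and P: "128 * (real n + 1) ^ 4 < 2 ^ p"
  defines "N \<equiv> 2 * n + 1" and "xs \<equiv> fe_input n f \<pi> istar"
  defines "X0 \<equiv> embed w0 (pe0 n) xs"
  defines "X1 \<equiv> attn_layer 7 LA True N X0"
  defines "X2 \<equiv> attn_layer 7 LB False N X1"
  defines "logit \<equiv> \<lambda>k. \<Sum>r<7. U0 k r * X2 (2 * n) r"
  shows "(\<forall>k<n. k \<noteq> f istar \<longrightarrow> logit k < logit (f istar)) \<and>
         (\<forall>k<N. \<forall>r<7. fixp p (X0 k r)) \<and>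
         attn_comp_prec p 7 LA True N X0 \<and>
         attn_comp_prec p 7 LB False N X1 \<and>
         (\<forall>k<n. fixp p (logit k))"
proof -
  define M :: real where "M = 4 * (real n + 1) ^ 2"
  have P': "8 * M^2 < 2 ^ p" using P unfolding M_def by (simp add: power_mult_distrib[symmetric] power_mult[symmetric])
  have "1 \<le> (real n + 1) ^ 2" using one_le_power[of "real n + 1" 2] by simp
  then have M1: "1 \<le> M" unfolding M_def by linarith
  have piv: "\<pi> k < n" if "k < n" for k using bij that by (auto simp: bij_betw_def)
  have tok: "xs k < n" if "k < N" for k
    using that ist fr piv unfolding xs_def fe_input_def N_def by auto
  have X0e: "X0 k r = (if r = 0 then 1 else if r = 1 then real (xs k) else if r = 2 then real (xs k) ^ 2
      else if r = 3 then real k else if r = 4 then real k ^ 2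
      else if r = 6 then (if odd k \<or> k = 2 * n then 1 else 0) else 0)" for k r
    unfolding X0_def embed_def w0_def pe0_def by auto
  define m1 where "m1 i = (LEAST j'. j' < N \<and> (\<forall>j''<N. score 7 LA X0 i j'' \<le> score 7 LA X0 i j'))" for i
  have X1e: "X1 i r = X0 i r + (if m1 i < N then (if r = 5 then X0 (m1 i) 1 else 0) else 0)" for i r
    unfolding X1_def attn_simp m1_def Let_def by (simp add: LA_def mv_v1)
  have m1e: "m1 i = (if i = 2 * n then 2 * n else i + 1)" if i: "i < N" for i
    unfolding m1_def
  proof (rule least_unique)
    show "(if i = 2 * n then 2 * n else i + 1) < N" using i N_def by auto
    show "\<forall>j<N. j \<noteq> (if i = 2 * n then 2 * n else i + 1) \<longrightarrow>
       score 7 LA X0 i j < score 7 LA X0 i (if i = 2 * n then 2 * n else i + 1)"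
    proof (intro allI impI)
      fix j assume j: "j < N" "j \<noteq> (if i = 2 * n then 2 * n else i + 1)"
      have sc: "score 7 LA X0 i j' = 2 * (1 + real i) * real j' - real j' ^ 2" for j'
        unfolding score_LA X0e by simp
      show "score 7 LA X0 i j < score 7 LA X0 i (if i = 2 * n then 2 * n else i + 1)"
      proof (cases "i = 2 * n")
        case True
        then have jl: "j < 2 * n" using j N_def by auto
        have e: "(2 * (1 + real i) * real (2 * n) - real (2 * n) ^ 2) - (2 * (1 + real i) * real j - real j ^ 2)
           = (real (2 * n) - real j) * (real (2 * n) + 2 - real j)"
          using True by (simp add: power2_eq_square algebra_simps)
        have "0 < (real (2 * n) - real j) * (real (2 * n) + 2 - real j)"
          using jl by (intro mult_pos_pos) auto
        then show ?thesis unfolding sc using True e by simp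
      next
        case False
        then have jn: "j \<noteq> i + 1" using j by auto
        have e: "(2 * (1 + real i) * real (i + 1) - real (i + 1) ^ 2) - (2 * (1 + real i) * real j - real j ^ 2)
           = (real (i + 1) - real j) ^ 2"
          by (simp add: power2_eq_square algebra_simps)
        have pos: "0 < (real (i + 1) - real j) ^ 2" using jn by simp
        show ?thesis unfolding if_not_P[OF False] using pos e sc[of j] sc[of "i+1"] by linarith
      qed
    qed
  qed
  have m1N: "m1 i < N" if "i < N" for i using m1e[OF that] that N_def by auto
  have X1e': "X1 i r = (if r = 5 then X0 (m1 i) 1 else X0 i r)" if "i < N" for i r
    using X1e[of i r] m1N[OF that] by (simp add: X0e)
  define m2 where "m2 i = (LEAST j'. j' < N \<and> (\<forall>j''<N. score 7 LB X1 i j'' \<le> score 7 LB X1 i j'))" for i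
  have X2e: "X2 i r = (if m2 i < N then (if r = 0 then X1 (m2 i) 5 else if r = 1 then X1 (m2 i) 0 else 0) else 0)" for i r
    unfolding X2_def attn_simp m2_def Let_def by (simp add: LB_def mv_v2)
  obtain k0 where k0: "k0 < n" "\<pi> k0 = istar" using bij ist unfolding bij_betw_def by (metis imageE lessThan_iff)
  have xj0: "xs (2 * k0) = istar" using k0 unfolding xs_def fe_input_def by auto
  have m2e: "m2 (2 * n) = 2 * k0" unfolding m2_def
  proof (rule least_unique)
    show "2 * k0 < N" using k0 N_def by auto
    have sc: "score 7 LB X1 (2 * n) j = real istar ^ 2 - (real (xs j) - real istar) ^ 2
         - (if odd j \<or> j = 2 * n then 1 else 0)" if "j < N" for j
    proof -
      have "xs (2 * n) = istar" unfolding xs_def fe_input_def by simp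
      then show ?thesis unfolding score_LB using that N_def
        by (simp add: X1e' X0e power2_eq_square algebra_simps)
    qed
    show "\<forall>j<N. j \<noteq> 2 * k0 \<longrightarrow> score 7 LB X1 (2 * n) j < score 7 LB X1 (2 * n) (2 * k0)"
    proof (intro allI impI)
      fix j assume j: "j < N" "j \<noteq> 2 * k0"
      have s0: "score 7 LB X1 (2 * n) (2 * k0) = real istar ^ 2"
        using sc[of "2 * k0"] k0 N_def xj0 by simp
      show "score 7 LB X1 (2 * n) j < score 7 LB X1 (2 * n) (2 * k0)"
      proof (cases "odd j \<or> j = 2 * n")
        case True
        have pos: "0 \<le> (real (xs j) - real istar) ^ 2" by simp
        show ?thesis unfolding s0 sc[OF j(1)] if_P[OF True] using pos by linarith
      next
        case False
        define k where "k = j div 2"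
        have k: "j = 2 * k" "k < n" using False j unfolding N_def k_def by auto
        have "k \<noteq> k0" using j k by auto
        then have "\<pi> k \<noteq> \<pi> k0" using bij k k0 unfolding bij_betw_def inj_on_def by auto
        moreover have "xs j = \<pi> k" using k unfolding xs_def fe_input_def by auto
        ultimately have "0 < (real (xs j) - real istar) ^ 2" using k0 by simp
        then show ?thesis unfolding s0 sc[OF j(1)] using False by simp
      qed
    qed
  qed
  have X2n: "X2 (2 * n) r = (if r = 0 then real (f istar) else if r = 1 then 1 else 0)" for r
  proof -
    have a: "2 * k0 < N" "2 * k0 \<noteq> 2 * n" "2 * k0 + 1 < N" using k0 N_def by auto
    have "xs (2 * k0 + 1) = f istar" using k0 unfolding xs_def fe_input_def by auto
    then show ?thesis using a unfolding X2e m2e by (simp add: X1e' m1e X0e)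
  qed
  have lg: "logit k = real (f istar) ^ 2 - (real k - real (f istar)) ^ 2" for k
    unfolding logit_def logit_U0 X2n by (simp add: power2_eq_square algebra_simps)
  have corr: "\<forall>k<n. k \<noteq> f istar \<longrightarrow> logit k < logit (f istar)"
    unfolding lg by auto
  have Ms: "real k \<le> M" "real k ^ 2 \<le> M" if "k \<le> 2 * n" for k
  proof -
    have "real k \<le> 2 * (real n + 1)" using that by simp
    then have "real k ^ 2 \<le> (2 * (real n + 1)) ^ 2" by (intro power_mono) auto
    moreover have "(2 * (real n + 1)) ^ 2 = M" unfolding M_def by (simp add: power2_eq_square algebra_simps)
    ultimately show "real k ^ 2 \<le> M" by linarith
    have "real k \<le> real k ^ 2" by (cases k) (auto simp: power2_eq_square)
    then show "real k \<le> M" using \<open>real k ^ 2 \<le> M\<close> by linarith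
  qed
  have Q0: "\<forall>i<N. \<forall>r. QQ M (X0 i r)"
  proof (intro allI impI)
    fix i r assume i: "i < N"
    have "xs i \<le> 2 * n" "i \<le> 2 * n" using tok[OF i] i N_def by auto
    note h = Ms[OF this(1)] Ms[OF this(2)]
    show "QQ M (X0 i r)" unfolding QQ_def X0e using h M1 by auto
  qed
  have Q1: "\<forall>i<N. \<forall>r. QQ M (X1 i r)"
    using Q0 m1N unfolding X1e' by (auto simp: X1e')
  have Q2: "\<forall>i<N. \<forall>r. QQ M (X2 i r)"
  proof (intro allI impI)
    fix i r assume i: "i < N"
    show "QQ M (X2 i r)" unfolding X2e using Q1 M1 by (auto simp: QQ_def)
  qed
  have F: "fixp p x" if "x \<in> \<int>" "- (8 * M^2) \<le> x" "x \<le> 8 * M^2" for x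
    using that P' by (intro fixp_I) auto
  have MM: "M \<le> M^2" using M1 by (simp add: power2_eq_square)
  have prec0: "\<forall>k<N. \<forall>r<7. fixp p (X0 k r)"
  proof (intro allI impI)
    fix k r :: nat assume "k < N"
    then have "QQ M (X0 k r)" using Q0 by blast
    then show "fixp p (X0 k r)" using QQ_D[of M "X0 k r"] MM by (intro F) auto
  qed
  have lgp: "\<forall>k<n. fixp p (logit k)"
  proof (intro allI impI)
    fix k assume k: "k < n"
    have "QQ M (real k)" "QQ M (real (f istar))" using Ms[of k] Ms[of "f istar"] k fr ist
      by (auto simp: QQ_def)
    note h = QQ_mult[OF this(1) this(2)] QQ_mult[OF this(1) this(1)]
    have e: "logit k = 2 * (real k * real (f istar)) - real k * real k"
      unfolding lg by (simp add: power2_eq_square algebra_simps)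
    show "fixp p (logit k)" unfolding e using h MM by (intro F) auto
  qed
  have pA: "attn_comp_prec p 7 LA True N X0"
    using prec_LA[OF Q0 _ M1 P'] Q1 unfolding X1_def by blast
  have pB: "attn_comp_prec p 7 LB False N X1"
    using prec_LB[OF Q1 _ M1 P'] Q2 unfolding X2_def by blast
  show ?thesis using corr prec0 pA pB lgp by blast
qed

theorem theorem9:
  shows "\<exists>C::nat. \<forall>n::nat. n \<ge> 1 \<longrightarrow>
    (\<exists>(w::nat \<Rightarrow> vec) (pe::nat \<Rightarrow> vec) (L1::attn) (L2::attn) (U::mat) (p::nat).
       0 < dh L1 \<and> 0 < dh L2 \<and>
       (2::nat) ^ p \<le> (n + 1) ^ C \<and>
       (\<forall>x<n. \<forall>r<7. fixp p (w x r)) \<and>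
       (\<forall>k<2*n+1. \<forall>r<7. fixp p (pe k r)) \<and>
       attn_params_prec p 7 L1 \<and> attn_params_prec p 7 L2 \<and>
       (\<forall>k<n. \<forall>r<7. fixp p (U k r)) \<and>
       (\<forall>(f::nat \<Rightarrow> nat) (\<pi>::nat \<Rightarrow> nat) (istar::nat).
          (\<forall>x<n. f x < n) \<and> bij_betw \<pi> {..<n} {..<n} \<and> istar < n \<longrightarrow>
          (let N = 2 * n + 1;
               X0 = embed w pe (fe_input n f \<pi> istar);
               X1 = attn_layer 7 L1 True N X0;
               X2 = attn_layer 7 L2 False N X1;
               logit = (\<lambda>k. \<Sum>r<7. U k r * X2 (2 * n) r)
           in (\<forall>k<n. k \<noteq> f istar \<longrightarrow> logit k < logit (f istar)) \<and>
              (\<forall>k<N. \<forall>r<7. fixp p (X0 k r)) \<and>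
              attn_comp_prec p 7 L1 True N X0 \<and>
              attn_comp_prec p 7 L2 False N X1 \<and>
              (\<forall>k<n. fixp p (logit k)))))"
  proof (intro exI[of _ 12] allI impI)
  fix n :: nat assume n1: "n \<ge> 1"
  obtain p where p: "2 ^ p \<le> (n + 1) ^ 12" "(n + 1) ^ 12 < 2 ^ (p + 1)"
    using ex_power_ivl1[of 2 "(n+1)^12"] by auto
  have "(2::nat) ^ 8 \<le> (n + 1) ^ 8" using n1 by (intro power_mono) auto
  then have "2 ^ 8 * (n + 1) ^ 4 \<le> (n + 1) ^ 8 * (n + 1) ^ 4" by (rule mult_le_mono1)
  also have "\<dots> = (n + 1) ^ 12" by (simp only: power_add[symmetric]) simp
  finally have "256 * (n + 1) ^ 4 \<le> (n + 1) ^ 12" by simp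
  then have "256 * (n + 1) ^ 4 < 2 * 2 ^ p" using p(2) by simp
  then have "128 * (n + 1) ^ 4 < 2 ^ p" by simp
  then have "real (128 * (n + 1) ^ 4) < real (2 ^ p)" by (simp only: of_nat_less_iff)
  then have P: "128 * (real n + 1) ^ 4 < 2 ^ p" by (simp add: add.commute)
  have one: "1 \<le> (real n + 1) ^ 2" using one_le_power[of "real n + 1" 2] by simp
  have sq: "(real n + 1) ^ 2 \<le> (real n + 1) ^ 4"
    using power_increasing[of 2 4 "real n + 1"] by simp
  have kb: "real k ^ 2 < 2 ^ p" "real k < 2 ^ p" if "k \<le> 2 * n" for k
  proof -
    have "real k \<le> 2 * (real n + 1)" using that by simp
    then have "real k ^ 2 \<le> (2 * (real n + 1)) ^ 2" by (intro power_mono) auto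
    moreover have "(2 * (real n + 1)) ^ 2 = 4 * (real n + 1) ^ 2" by (simp add: power2_eq_square algebra_simps)
    ultimately show "real k ^ 2 < 2 ^ p" using P one sq by linarith
    have "real k \<le> real k ^ 2" by (cases k) (auto simp: power2_eq_square)
    then show "real k < 2 ^ p" using \<open>real k ^ 2 < 2 ^ p\<close> by linarith
  qed
  have c4: "4 < (2::real) ^ p" using P one sq by linarith
  have sm: "fixp p x" if "x \<in> {0, 1, 4, -2}" for x
    using that c4 by (intro fixp_I) auto
  have Fk: "fixp p (real k)" "fixp p (real k ^ 2)" "fixp p (- (real k ^ 2))" if "k \<le> 2 * n" for k
    using kb[OF that] by (auto intro!: fixp_I)
  have F2k: "fixp p (2 * real k)" if "k < n" for k
    using kb[of "2 * k"] that by (auto intro!: fixp_I)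
  show "\<exists>(w::nat \<Rightarrow> vec) (pe::nat \<Rightarrow> vec) (L1::attn) (L2::attn) (U::mat) (p::nat).
       0 < dh L1 \<and> 0 < dh L2 \<and>
       (2::nat) ^ p \<le> (n + 1) ^ 12 \<and>
       (\<forall>x<n. \<forall>r<7. fixp p (w x r)) \<and>
       (\<forall>k<2*n+1. \<forall>r<7. fixp p (pe k r)) \<and>
       attn_params_prec p 7 L1 \<and> attn_params_prec p 7 L2 \<and>
       (\<forall>k<n. \<forall>r<7. fixp p (U k r)) \<and>
       (\<forall>(f::nat \<Rightarrow> nat) (\<pi>::nat \<Rightarrow> nat) (istar::nat).
          (\<forall>x<n. f x < n) \<and> bij_betw \<pi> {..<n} {..<n} \<and> istar < n \<longrightarrow>
          (let N = 2 * n + 1;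
               X0 = embed w pe (fe_input n f \<pi> istar);
               X1 = attn_layer 7 L1 True N X0;
               X2 = attn_layer 7 L2 False N X1;
               logit = (\<lambda>k. \<Sum>r<7. U k r * X2 (2 * n) r)
           in (\<forall>k<n. k \<noteq> f istar \<longrightarrow> logit k < logit (f istar)) \<and>
              (\<forall>k<N. \<forall>r<7. fixp p (X0 k r)) \<and>
              attn_comp_prec p 7 L1 True N X0 \<and>
              attn_comp_prec p 7 L2 False N X1 \<and>
              (\<forall>k<n. fixp p (logit k))))"
  proof -
    have h1: "0 < dh LA" "0 < dh LB" by (simp_all add: LA_def LB_def)
    have h2: "2 ^ p \<le> (n + 1) ^ 12" by (rule p(1))
    have h3: "\<forall>x<n. \<forall>r<7. fixp p (w0 x r)"
      using Fk sm by (auto simp: w0_def)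
    have h4: "\<forall>k<2*n+1. \<forall>r<7. fixp p (pe0 n k r)"
      using Fk sm by (auto simp: pe0_def)
    have h5: "attn_params_prec p 7 LA" "attn_params_prec p 7 LB"
      unfolding attn_params_prec_def LA_def LB_def
      by (auto simp: q1_def k1_def v1_def q2_def k2_def v2_def intro!: sm)
    have h6: "\<forall>k<n. \<forall>r<7. fixp p (U0 k r)"
      using Fk F2k sm by (auto simp: U0_def)
    have h7: "\<forall>(f::nat \<Rightarrow> nat) (\<pi>::nat \<Rightarrow> nat) (istar::nat).
          (\<forall>x<n. f x < n) \<and> bij_betw \<pi> {..<n} {..<n} \<and> istar < n \<longrightarrow>
          (let N = 2 * n + 1;
               X0 = embed w0 (pe0 n) (fe_input n f \<pi> istar);
               X1 = attn_layer 7 LA True N X0;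
               X2 = attn_layer 7 LB False N X1;
               logit = (\<lambda>k. \<Sum>r<7. U0 k r * X2 (2 * n) r)
           in (\<forall>k<n. k \<noteq> f istar \<longrightarrow> logit k < logit (f istar)) \<and>
              (\<forall>k<N. \<forall>r<7. fixp p (X0 k r)) \<and>
              attn_comp_prec p 7 LA True N X0 \<and>
              attn_comp_prec p 7 LB False N X1 \<and>
              (\<forall>k<n. fixp p (logit k)))"
      unfolding Let_def using main[OF n1 _ _ _ P] by blast
    show ?thesis using h1 h2 h3 h4 h5 h6 h7 by blast
  qed
qed

end
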